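(* Let $d\ge2$, let $-\infty\le a<b\le\infty$, and let $\phi\in C^{(d)}(a,b)$ satisfy $\phi^{(j)}(t)>0$ for all $t\in(a,b)$ and $j=0,1,\dots,d$, with $\phi^{(d)}$ nondecreasing on $(a,b)$. Let $$\gamma(t)=\Big(t,\frac{t^2}{2},\dots,\frac{t^{d-1}}{(d-1)!},\phi(t)\Big),\qquad \omega=(\phi^{(d)})^{2/(d^2+d)},$$ and suppose there is a constant $A$ such that $\big(\omega(s_1)\omega(s_2)\big)^{1/2}\le A\,\omega\big(\tfrac{s_1+s_2}{2}\big)$ for all $s_1,s_2\in(a,b)$. Fix a choice of signs and let $J(t_1,\dots,t_d)$ be the absolute value of the Jacobian determinant of the map $$(t_1,\dots,t_d)\mapsto \gamma(t_1)\pm\gamma(t_2)\pm\cdots\pm\gamma(t_d).$$ Let $n_1\le\cdots\le n_d$ be positive numbers with $n_1+\cdots+n_d=d(d+1)/2$. Suppose $\{i_1,\dots,i_d\}=\{1,\dots,d\}$ and $a<t_{i_1}<\cdots<t_{i_d}<b$. Then $$J(t_1,\dots,t_d)\ge c\,\Big(\prod_{j=1}^d\omega(t_{i_j})^{n_j}\Big)\,V(t_1,\dots,t_d),\qquad V(t_1,\dots,t_d)=\Big|\prod_{1\le i<j\le d}(t_j-t_i)\Big|,$$ where $c>0$ depends only on $A$ and on $n_1,\dots,n_d$. *)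

theory Defs
  imports "HOL-Analysis.Analysis" "Jordan_Normal_Form.Determinant"
begin

definition ivl :: "ereal \<Rightarrow> ereal \<Rightarrow> real set" where
  "ivl a b = {t. a < ereal t \<and> ereal t < b}"

definition Cd_on :: "nat \<Rightarrow> real set \<Rightarrow> (real \<Rightarrow> real) \<Rightarrow> bool" where
  "Cd_on d S phi \<longleftrightarrow>
     (\<forall>j<d. \<forall>t\<in>S. ((deriv ^^ j) phi has_real_derivative (deriv ^^ Suc j) phi t) (at t))
     \<and> continuous_on S ((deriv ^^ d) phi)"

definition gam :: "nat \<Rightarrow> (real \<Rightarrow> real) \<Rightarrow> nat \<Rightarrow> real \<Rightarrow> real" where
  "gam d phi k t = (if k + 1 < d then t ^ (k + 1) / fact (k + 1) else phi t)"

definition Fmap :: "nat \<Rightarrow> (real \<Rightarrow> real) \<Rightarrow> (nat \<Rightarrow> real) \<Rightarrow> (nat \<Rightarrow> real) \<Rightarrow> nat \<Rightarrow> real" where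
  "Fmap d phi \<sigma> t k = (\<Sum>i<d. \<sigma> i * gam d phi k (t i))"

definition Jac :: "nat \<Rightarrow> (real \<Rightarrow> real) \<Rightarrow> (nat \<Rightarrow> real) \<Rightarrow> (nat \<Rightarrow> real) \<Rightarrow> real" where
  "Jac d phi \<sigma> t = \<bar>det (mat d d (\<lambda>(k, i). deriv (\<lambda>s. Fmap d phi \<sigma> (t(i := s)) k) (t i)))\<bar>"

definition Vand :: "nat \<Rightarrow> (nat \<Rightarrow> real) \<Rightarrow> real" where
  "Vand d t = \<bar>\<Prod>j<d. \<Prod>i<j. (t j - t i)\<bar>"

end

theory Submission
  imports Defs
begin

definition Wm :: "nat \<Rightarrow> (real \<Rightarrow> real) \<Rightarrow> (nat \<Rightarrow> real) \<Rightarrow> real Matrix.mat" where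
  "Wm d f t = Matrix.mat d d (\<lambda>(k,i). if Suc k < d then t i ^ k else f (t i))"

definition cof :: "nat \<Rightarrow> (nat \<Rightarrow> real) \<Rightarrow> nat \<Rightarrow> real" where
  "cof d t j = cofactor (Wm d (\<lambda>_. 0) t) (d-1) j"

lemma Wm_carrier[simp]: "Wm d f t \<in> carrier_mat d d"
  by (simp add: Wm_def)

lemma cof_indep: "cofactor (Wm d f t) (d-1) j = cof d t j"
proof -
  have "mat_delete (Wm d f t) (d-1) j = mat_delete (Wm d (\<lambda>_. 0) t) (d-1) j"
    by (rule eq_matI) (auto simp: mat_delete_def Wm_def)
  thus ?thesis unfolding cof_def cofactor_def by simp
qed

lemma Wm_entry: "0 < d \<Longrightarrow> j < d \<Longrightarrow> Wm d f t $$ (d-1,j) = f (t j)"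
  by (simp add: Wm_def)

lemma det_Wm_lap:
  assumes "0 < d"
  shows "det (Wm d f t) = (\<Sum>j<d. f (t j) * cof d t j)"
proof -
  have "det (Wm d f t) = (\<Sum>j<d. Wm d f t $$ (d-1,j) * cofactor (Wm d f t) (d-1) j)"
    by (rule laplace_expansion_row[OF Wm_carrier]) (use assms in auto)
  also have "\<dots> = (\<Sum>j<d. f (t j) * cof d t j)"
    apply (rule sum.cong[OF refl]) using assms Wm_entry cof_indep by (metis lessThan_iff)
  finally show ?thesis .
qed

lemma det_Wm_pow0:
  assumes "Suc k < d"
  shows "det (Wm d (\<lambda>x. x ^ k) t) = 0"
proof (rule det_identical_rows[OF Wm_carrier, of k "d-1"])
  show "row (Wm d (\<lambda>x. x ^ k) t) k = row (Wm d (\<lambda>x. x ^ k) t) (d - 1)"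
    by (rule eq_vecI) (use assms in \<open>auto simp: Wm_def\<close>)
qed (use assms in auto)

lemma det_Wm_sum:
  assumes "0 < d"
  shows "det (Wm d (\<lambda>x. \<Sum>k<d. c k * x ^ k) t) = c (d-1) * det (Wm d (\<lambda>x. x ^ (d-1)) t)"
proof -
  have "det (Wm d (\<lambda>x. \<Sum>k<d. c k * x ^ k) t) = (\<Sum>j<d. (\<Sum>k<d. c k * t j ^ k) * cof d t j)"
    by (rule det_Wm_lap[OF assms])
  also have "\<dots> = (\<Sum>k<d. c k * (\<Sum>j<d. t j ^ k * cof d t j))"
  proof -
    have "(\<Sum>j<d. (\<Sum>k<d. c k * t j ^ k) * cof d t j) = (\<Sum>j<d. \<Sum>k<d. c k * (t j ^ k * cof d t j))"
      by (simp add: sum_distrib_right mult.assoc)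
    also have "\<dots> = (\<Sum>k<d. \<Sum>j<d. c k * (t j ^ k * cof d t j))"
      by (rule sum.swap)
    also have "\<dots> = (\<Sum>k<d. c k * (\<Sum>j<d. t j ^ k * cof d t j))"
      by (simp add: sum_distrib_left)
    finally show ?thesis .
  qed
  also have "\<dots> = (\<Sum>k<d. c k * det (Wm d (\<lambda>x. x ^ k) t))"
    using det_Wm_lap[OF assms] by simp
  also have "\<dots> = (\<Sum>k\<in>{d-1}. c k * det (Wm d (\<lambda>x. x ^ k) t))"
    by (rule sum.mono_neutral_right) (use assms det_Wm_pow0 in auto)
  finally show ?thesis by simp
qed

lemma det_Wm_poly:
  assumes "0 < d" "degree p < d"
  shows "det (Wm d (poly p) t) = coeff p (d-1) * det (Wm d (\<lambda>x. x ^ (d-1)) t)"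
proof -
  have "poly p = (\<lambda>x. \<Sum>k<d. coeff p k * x ^ k)"
  proof
    fix x
    have "poly p x = (\<Sum>k\<le>degree p. coeff p k * x ^ k)" by (rule poly_altdef)
    also have "\<dots> = (\<Sum>k<d. coeff p k * x ^ k)"
      by (rule sum.mono_neutral_left) (use assms in \<open>auto simp: coeff_eq_0\<close>)
    finally show "poly p x = (\<Sum>k<d. coeff p k * x ^ k)" .
  qed
  thus ?thesis using det_Wm_sum[OF assms(1)] by simp
qed

definition lam :: "nat \<Rightarrow> (real \<Rightarrow> real) \<Rightarrow> (nat \<Rightarrow> real) \<Rightarrow> real" where
  "lam m f x = (\<Sum>i<m. f (x i) / (\<Prod>j\<in>{..<m}-{i}. (x i - x j)))"

lemma cof_formula:
  assumes inj: "inj_on t {..<d}" and d: "0 < d" and i: "i < d"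
  shows "cof d t i * (\<Prod>j\<in>{..<d}-{i}. (t i - t j)) = det (Wm d (\<lambda>x. x ^ (d-1)) t)"
proof -
  define l where "l = (\<Prod>j\<in>{..<d}-{i}. [:- t j, 1:])"
  have pl: "poly l x = (\<Prod>j\<in>{..<d}-{i}. (x - t j))" for x
    unfolding l_def poly_prod by simp
  have nz: "\<forall>j\<in>{..<d}-{i}. [:- t j, 1:] \<noteq> 0" by auto
  have dl: "degree l = d - 1"
    unfolding l_def degree_prod_eq_sum_degree[OF nz] using i by simp
  have lc: "coeff l (d-1) = 1"
    using dl lead_coeff_prod[of "\<lambda>j. [:- t j, 1:]" "{..<d}-{i}"] unfolding l_def by simp
  have "det (Wm d (poly l) t) = det (Wm d (\<lambda>x. x ^ (d-1)) t)"
    using det_Wm_poly[of d l t] d dl lc by simp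
  moreover have "det (Wm d (poly l) t) = (\<Sum>j<d. poly l (t j) * cof d t j)"
    by (rule det_Wm_lap[OF d])
  moreover have "(\<Sum>j<d. poly l (t j) * cof d t j) = (\<Sum>j\<in>{i}. poly l (t j) * cof d t j)"
    by (rule sum.mono_neutral_right) (use i in \<open>auto simp: pl\<close>)
  ultimately show ?thesis by (simp add: pl mult.commute)
qed

lemma prod_nz:
  fixes t :: "nat \<Rightarrow> real"
  assumes inj: "inj_on t {..<d}" and i: "i < d"
  shows "(\<Prod>j\<in>{..<d}-{i}. (t i - t j)) \<noteq> 0"
proof
  assume "(\<Prod>j\<in>{..<d}-{i}. (t i - t j)) = 0"
  then obtain j where "j \<in> {..<d}-{i}" "t i - t j = 0"
    by (metis (no_types, lifting) finite_Diff finite_lessThan prod_zero_iff)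
  thus False using inj i by (auto simp: inj_on_def)
qed

lemma det_Wm_lam:
  assumes inj: "inj_on t {..<d}" and d: "0 < d"
  shows "det (Wm d f t) = det (Wm d (\<lambda>x. x ^ (d-1)) t) * lam d f t"
proof -
  have c: "cof d t i = det (Wm d (\<lambda>x. x ^ (d-1)) t) / (\<Prod>j\<in>{..<d}-{i}. (t i - t j))" if "i < d" for i
    using cof_formula[OF inj d that] prod_nz[OF inj that] by (simp add: field_simps)
  have "det (Wm d f t) = (\<Sum>j<d. f (t j) * cof d t j)" by (rule det_Wm_lap[OF d])
  also have "\<dots> = det (Wm d (\<lambda>x. x ^ (d-1)) t) * lam d f t"
    unfolding lam_def sum_distrib_left
    by (rule sum.cong) (auto simp: c)
  finally show ?thesis .
qed

lemma Vs_formula: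
  "inj_on t {..<d} \<Longrightarrow> det (Wm d (\<lambda>x. x ^ (d-1)) t) = (\<Prod>j<d. \<Prod>i<j. (t j - t i))"
proof (induction d)
  case 0
  then show ?case by (simp add: Wm_def)
next
  case (Suc m)
  have inj: "inj_on t {..<m}" using Suc.prems by (auto simp: inj_on_def)
  have del: "mat_delete (Wm (Suc m) (\<lambda>_. 0) t) m m = Wm m (\<lambda>x. x ^ (m-1)) t"
    apply (rule eq_matI)
    apply (auto simp: mat_delete_def Wm_def)
    subgoal for i j by (subgoal_tac "i = m - Suc 0") auto
    done
  have "cof (Suc m) t m = det (Wm m (\<lambda>x. x ^ (m-1)) t)"
    unfolding cof_def cofactor_def using del by simp
  also have "\<dots> = (\<Prod>j<m. \<Prod>i<j. (t j - t i))" using Suc.IH[OF inj] .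
  finally have "det (Wm (Suc m) (\<lambda>x. x ^ (Suc m - 1)) t) = (\<Prod>j<m. \<Prod>i<j. (t j - t i)) * (\<Prod>j\<in>{..<Suc m}-{m}. (t m - t j))"
    using cof_formula[OF Suc.prems, of m] by simp
  also have "{..<Suc m}-{m} = {..<m}" by auto
  finally show ?case by simp
qed

lemma lam_lin: "lam m (\<lambda>s. f s - c * q s) x = lam m f x - c * lam m q x"
  unfolding lam_def by (simp add: sum_subtractf sum_distrib_left diff_divide_distrib)

lemma lam_mult:
  fixes x :: "nat \<Rightarrow> real"
  assumes inj: "inj_on x {..<Suc m}"
  shows "lam (Suc m) (\<lambda>s. (s - a) * v s) x = (x m - a) * lam (Suc m) v x + lam m v x"
proof -
  have "lam (Suc m) (\<lambda>s. (s - a) * v s) x - (x m - a) * lam (Suc m) v x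
      = (\<Sum>i<Suc m. (x i - x m) * v (x i) / (\<Prod>j\<in>{..<Suc m}-{i}. (x i - x j)))"
    unfolding lam_def sum_distrib_left sum_subtractf[symmetric]
  proof (rule sum.cong[OF refl])
    fix i
    let ?P = "(\<Prod>j\<in>{..<Suc m}-{i}. (x i - x j))"
    have "(x i - a) * v (x i) / ?P - (x m - a) * (v (x i) / ?P) = ((x i - a) * v (x i) - (x m - a) * v (x i)) / ?P"
      by (simp add: diff_divide_distrib)
    also have "(x i - a) * v (x i) - (x m - a) * v (x i) = (x i - x m) * v (x i)" by (simp add: algebra_simps)
    finally show "(x i - a) * v (x i) / ?P - (x m - a) * (v (x i) / ?P) = (x i - x m) * v (x i) / ?P" .
  qed
  also have "\<dots> = (\<Sum>i<m. (x i - x m) * v (x i) / (\<Prod>j\<in>{..<Suc m}-{i}. (x i - x j)))"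
    by simp
  also have "\<dots> = lam m v x"
    unfolding lam_def
  proof (rule sum.cong[OF refl])
    fix i assume i: "i \<in> {..<m}"
    have e: "{..<Suc m}-{i} = insert m ({..<m}-{i})" using i by auto
    have ne: "x i - x m \<noteq> 0" using inj i by (auto simp: inj_on_def)
    show "(x i - x m) * v (x i) / (\<Prod>j\<in>{..<Suc m}-{i}. (x i - x j)) = v (x i) / (\<Prod>j\<in>{..<m}-{i}. (x i - x j))"
      unfolding e using ne by (subst prod.insert) auto
  qed
  finally show ?thesis by simp
qed

lemma lam_perm:
  fixes t :: "nat \<Rightarrow> real"
  assumes p: "p permutes {..<d}"
  shows "lam d f (t \<circ> p) = lam d f t"
proof -
  have inj: "inj_on p A" for A using p by (meson permutes_inj inj_on_subset subset_UNIV)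
  have img: "p ` ({..<d}-{i}) = {..<d}-{p i}" if "i < d" for i
  proof -
    have "p ` ({..<d}-{i}) = p ` {..<d} - p ` {i}"
      by (rule inj_on_image_set_diff[of p UNIV]) (use p permutes_inj in auto)
    thus ?thesis using permutes_image[OF p] by simp
  qed
  have "lam d f (t \<circ> p) = (\<Sum>i<d. f (t (p i)) / (\<Prod>j\<in>{..<d}-{p i}. (t (p i) - t j)))"
    unfolding lam_def
  proof (rule sum.cong[OF refl])
    fix i assume i: "i \<in> {..<d}"
    have "(\<Prod>j\<in>{..<d}-{p i}. (t (p i) - t j)) = (\<Prod>j\<in>p ` ({..<d}-{i}). (t (p i) - t j))"
      using img i by simp
    also have "\<dots> = (\<Prod>j\<in>{..<d}-{i}. (t (p i) - t (p j)))"
      by (simp add: prod.reindex[OF inj])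
    finally show "f ((t \<circ> p) i) / (\<Prod>j\<in>{..<d}-{i}. ((t \<circ> p) i - (t \<circ> p) j)) = f (t (p i)) / (\<Prod>j\<in>{..<d}-{p i}. (t (p i) - t j))"
      by simp
  qed
  also have "\<dots> = (\<Sum>i\<in>p ` {..<d}. f (t i) / (\<Prod>j\<in>{..<d}-{i}. (t i - t j)))"
    by (rule sum.reindex[OF inj, symmetric, unfolded comp_def])
  also have "\<dots> = lam d f t" unfolding lam_def permutes_image[OF p] ..
  finally show ?thesis .
qed

lemma chain_less:
  fixes z :: "nat \<Rightarrow> real"
  assumes "\<forall>i<n. z i < z (Suc i)" "i < j" "j \<le> n"
  shows "z i < z j"
  using assms(2,3)
proof (induction j)
  case 0 then show ?case by simp
next
  case (Suc j)
  show ?case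
  proof (cases "i = j")
    case True then show ?thesis using assms(1) Suc.prems by auto
  next
    case False
    then have "z i < z j" using Suc by auto
    also have "z j < z (Suc j)" using assms(1) Suc.prems by auto
    finally show ?thesis .
  qed
qed

lemma rolle1:
  fixes F G :: "real \<Rightarrow> real"
  assumes "a < b" "F a = 0" "F b = 0" "\<forall>s. a \<le> s \<and> s \<le> b \<longrightarrow> (F has_real_derivative G s) (at s)"
  shows "\<exists>\<xi>. a < \<xi> \<and> \<xi> < b \<and> G \<xi> = 0"
proof -
  have cont: "continuous_on {a..b} F"
    using assms(4) by (intro continuous_at_imp_continuous_on) (auto intro: DERIV_isCont)
  obtain z where z: "a < z" "z < b" "DERIV F z :> 0"
    using Rolle[OF assms(1) _ cont] assms(2,3,4) by (metis less_eq_real_def real_differentiable_def)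
  have "DERIV F z :> G z" using assms(4) z by auto
  then have "G z = 0" using z(3) DERIV_unique by blast
  thus ?thesis using z by blast
qed

lemma rolle_chain:
  fixes F :: "nat \<Rightarrow> real \<Rightarrow> real" and z :: "nat \<Rightarrow> real"
  assumes "\<forall>i<Suc k. z i < z (Suc i)" "\<forall>i\<le>Suc k. F 0 (z i) = 0"
    "\<forall>j<Suc k. \<forall>s. z 0 \<le> s \<and> s \<le> z (Suc k) \<longrightarrow> (F j has_real_derivative F (Suc j) s) (at s)"
  shows "\<exists>\<xi>. z 0 < \<xi> \<and> \<xi> < z (Suc k) \<and> F (Suc k) \<xi> = 0"
  using assms
proof (induction k arbitrary: F z)
  case 0
  then show ?case using rolle1[of "z 0" "z 1" "F 0" "F 1"] by auto
next
  case (Suc k)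
  have lt: "z i < z j" if "i < j" "j \<le> Suc (Suc k)" for i j
    using chain_less[OF Suc.prems(1)] that by blast
  have le0: "z 0 \<le> z i" if "i \<le> Suc (Suc k)" for i
    using lt[of 0 i] that by (cases i) auto
  have leN: "z i \<le> z (Suc (Suc k))" if "i \<le> Suc (Suc k)" for i
    using lt[of i "Suc (Suc k)"] that by (cases "i = Suc (Suc k)") auto
  have "\<forall>i\<in>{..Suc k}. \<exists>w. z i < w \<and> w < z (Suc i) \<and> F 1 w = 0"
  proof
    fix i assume i: "i \<in> {..Suc k}"
    show "\<exists>w. z i < w \<and> w < z (Suc i) \<and> F 1 w = 0"
    proof (rule rolle1)
      show "z i < z (Suc i)" using Suc.prems(1) i by auto
      show "F 0 (z i) = 0" "F 0 (z (Suc i)) = 0" using Suc.prems(2) i by auto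
      show "\<forall>s. z i \<le> s \<and> s \<le> z (Suc i) \<longrightarrow> (F 0 has_real_derivative F 1 s) (at s)"
      proof (intro allI impI)
        fix s assume s: "z i \<le> s \<and> s \<le> z (Suc i)"
        have "z 0 \<le> s" "s \<le> z (Suc (Suc k))" using le0[of i] leN[of "Suc i"] i s by auto
        then show "(F 0 has_real_derivative F 1 s) (at s)"
          using Suc.prems(3)[rule_format, of 0 s] by simp
      qed
    qed
  qed
  then have "\<exists>w. \<forall>i\<in>{..Suc k}. z i < w i \<and> w i < z (Suc i) \<and> F 1 (w i) = 0"
    by (rule bchoice)
  then obtain w where w0: "\<forall>i\<in>{..Suc k}. z i < w i \<and> w i < z (Suc i) \<and> F 1 (w i) = 0"
    by (elim exE)
  have w: "z i < w i \<and> w i < z (Suc i) \<and> F 1 (w i) = 0" if "i \<le> Suc k" for i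
    using w0 that by simp
  have "\<exists>\<xi>. w 0 < \<xi> \<and> \<xi> < w (Suc k) \<and> (\<lambda>j. F (Suc j)) (Suc k) \<xi> = 0"
  proof (rule Suc.IH)
    show "\<forall>i<Suc k. w i < w (Suc i)"
    proof (intro allI impI)
      fix i assume "i < Suc k"
      then show "w i < w (Suc i)" using w[of i] w[of "Suc i"] by auto
    qed
    show "\<forall>i\<le>Suc k. F (Suc 0) (w i) = 0" using w by (simp add: One_nat_def)
    have "z 0 < w 0" "w (Suc k) < z (Suc (Suc k))" using w[of 0] w[of "Suc k"] by auto
    then show "\<forall>j<Suc k. \<forall>s. w 0 \<le> s \<and> s \<le> w (Suc k) \<longrightarrow> (F (Suc j) has_real_derivative F (Suc (Suc j)) s) (at s)"
    proof (intro allI impI)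
      fix j s assume j: "j < Suc k" and s: "w 0 \<le> s \<and> s \<le> w (Suc k)"
      have "z 0 \<le> s" "s \<le> z (Suc (Suc k))" using s \<open>z 0 < w 0\<close> \<open>w (Suc k) < z (Suc (Suc k))\<close> by auto
      then show "(F (Suc j) has_real_derivative F (Suc (Suc j)) s) (at s)"
        using Suc.prems(3)[rule_format, of "Suc j" s] j by simp
    qed
  qed
  then obtain \<xi> where "w 0 < \<xi>" "\<xi> < w (Suc k)" "F (Suc (Suc k)) \<xi> = 0" by auto
  moreover have "z 0 < w 0" "w (Suc k) < z (Suc (Suc k))" using w[of 0] w[of "Suc k"] by auto
  ultimately show ?case by (intro exI[of _ \<xi>]) auto
qed


lemma lam_mvt:
  fixes F :: "nat \<Rightarrow> real \<Rightarrow> real" and x :: "nat \<Rightarrow> real"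
  assumes mono: "\<forall>i<Suc k. x i < x (Suc i)"
    and der: "\<forall>j<Suc k. \<forall>s. x 0 \<le> s \<and> s \<le> x (Suc k) \<longrightarrow> (F j has_real_derivative F (Suc j) s) (at s)"
  shows "\<exists>\<xi>. x 0 < \<xi> \<and> \<xi> < x (Suc k) \<and> F (Suc k) \<xi> = fact (Suc k) * lam (Suc (Suc k)) (F 0) x"
proof -
  define n where "n = Suc (Suc k)"
  define m where "m = Suc k"
  have inj: "inj_on x {..<n}"
  proof (rule inj_onI)
    fix i j assume "i \<in> {..<n}" "j \<in> {..<n}" "x i = x j"
    then show "i = j" using chain_less[OF mono, of i j] chain_less[OF mono, of j i]
      unfolding n_def by (cases "i < j"; cases "j < i") auto
  qed
  define w where "w i = (\<Prod>j\<in>{..<n}-{i}. (x i - x j))" for i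
  define c where "c i = F 0 (x i) / w i" for i
  define l where "l i = (\<Prod>j\<in>{..<n}-{i}. [:- x j, 1:])" for i
  define P where "P = (\<Sum>i<n. Polynomial.smult (c i) (l i))"
  have pl: "poly (l i) y = (\<Prod>j\<in>{..<n}-{i}. (y - x j))" for i y
    unfolding l_def poly_prod by simp
  have nz: "\<forall>j\<in>{..<n}-{i}. [:- x j, 1:] \<noteq> 0" for i by auto
  have dl: "degree (l i) = m" if "i < n" for i
    unfolding l_def degree_prod_eq_sum_degree[OF nz] using that by (simp add: n_def m_def)
  have lc: "coeff (l i) m = 1" if "i < n" for i
    using dl[OF that] lead_coeff_prod[of "\<lambda>j. [:- x j, 1:]" "{..<n}-{i}"] unfolding l_def by simp
  have wnz: "w i \<noteq> 0" if "i < n" for i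
    unfolding w_def using prod_nz[OF inj that] .
  have interp: "poly P (x i) = F 0 (x i)" if i: "i < n" for i
  proof -
    have "poly P (x i) = (\<Sum>j<n. c j * poly (l j) (x i))"
      unfolding P_def by (simp add: poly_sum)
    also have "\<dots> = (\<Sum>j\<in>{i}. c j * poly (l j) (x i))"
      by (rule sum.mono_neutral_right) (use i in \<open>auto simp: pl\<close>)
    also have "\<dots> = F 0 (x i)"
      using wnz[OF i] by (simp add: pl c_def w_def)
    finally show ?thesis .
  qed
  have degP: "degree P \<le> m"
    unfolding P_def
    by (rule degree_sum_le) (auto intro: order.trans[OF degree_smult_le] simp: dl)
  have cP: "coeff P m = lam n (F 0) x"
    unfolding P_def lam_def coeff_sum using lc by (simp add: c_def w_def)
  define G where "G j s = F j s - poly ((pderiv ^^ j) P) s" for j s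
  have "\<exists>\<xi>. x 0 < \<xi> \<and> \<xi> < x (Suc k) \<and> G (Suc k) \<xi> = 0"
  proof (rule rolle_chain)
    show "\<forall>i<Suc k. x i < x (Suc i)" by (rule mono)
    show "\<forall>i\<le>Suc k. G 0 (x i) = 0" using interp by (simp add: G_def n_def)
    show "\<forall>j<Suc k. \<forall>s. x 0 \<le> s \<and> s \<le> x (Suc k) \<longrightarrow> (G j has_real_derivative G (Suc j) s) (at s)"
    proof (intro allI impI)
      fix j s assume j: "j < Suc k" and s: "x 0 \<le> s \<and> s \<le> x (Suc k)"
      have "(F j has_real_derivative F (Suc j) s) (at s)" using der j s by blast
      moreover have "((\<lambda>s. poly ((pderiv ^^ j) P) s) has_real_derivative poly ((pderiv ^^ Suc j) P) s) (at s)"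
        by simp
      ultimately have "((\<lambda>s. F j s - poly ((pderiv ^^ j) P) s) has_real_derivative F (Suc j) s - poly ((pderiv ^^ Suc j) P) s) (at s)"
        by (rule DERIV_diff)
      then show "(G j has_real_derivative G (Suc j) s) (at s)"
        unfolding G_def[abs_def] by simp
    qed
  qed
  then obtain \<xi> where xi: "x 0 < \<xi>" "\<xi> < x (Suc k)" "G (Suc k) \<xi> = 0" by blast
  define Q where "Q = (pderiv ^^ m) P"
  have dQ: "degree Q = 0" unfolding Q_def degree_higher_pderiv using degP by simp
  have "poly Q \<xi> = coeff Q 0" using poly_altdef[of Q \<xi>] dQ by simp
  also have "\<dots> = fact m * coeff P m"
    unfolding Q_def coeff_higher_pderiv by (simp add: pochhammer_fact)
  finally have "poly Q \<xi> = fact m * lam n (F 0) x" using cP by simp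
  then have "F (Suc k) \<xi> = fact (Suc k) * lam (Suc (Suc k)) (F 0) x"
    using xi(3) unfolding G_def Q_def m_def n_def by simp
  then show ?thesis using xi by blast
qed


definition PF :: "nat \<Rightarrow> real \<Rightarrow> nat \<Rightarrow> real \<Rightarrow> real" where
  "PF N a j s = (\<Prod>i<j. real (N - i)) * (s - a) ^ (N - j)"

lemma PF_deriv: "(PF N a j has_real_derivative PF N a (Suc j) s) (at s)"
proof -
  have "((\<lambda>s. (\<Prod>i<j. real (N - i)) * (s - a) ^ (N - j)) has_real_derivative
        (\<Prod>i<j. real (N - i)) * (real (N - j) * (s - a) ^ (N - j - 1))) (at s)"
    by (auto intro!: derivative_eq_intros)
  moreover have "(\<Prod>i<j. real (N - i)) * (real (N - j) * (s - a) ^ (N - j - 1)) = PF N a (Suc j) s"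
    unfolding PF_def by (simp add: algebra_simps)
  ultimately show ?thesis unfolding PF_def[abs_def] by (simp add: mult.assoc)
qed

lemma PF0: "PF N a 0 = (\<lambda>s. (s - a) ^ N)"
  unfolding PF_def by auto

lemma lam_pow_nonneg:
  fixes x :: "nat \<Rightarrow> real"
  assumes mono: "\<forall>i<m. x i < x (Suc i)" and a: "a \<le> x 0"
  shows "0 \<le> lam (Suc m) (\<lambda>s. (s - a) ^ N) x"
proof (cases m)
  case 0
  then show ?thesis using a by (simp add: lam_def)
next
  case (Suc k)
  obtain \<xi> where xi: "x 0 < \<xi>" "PF N a (Suc k) \<xi> = fact (Suc k) * lam (Suc (Suc k)) (PF N a 0) x"
    using lam_mvt[of k x "PF N a"] mono Suc PF_deriv by blast
  have "0 \<le> PF N a (Suc k) \<xi>" unfolding PF_def using xi a by (intro mult_nonneg_nonneg prod_nonneg) auto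
  then have h: "0 \<le> fact (Suc k) * lam (Suc (Suc k)) (PF N a 0) x" using xi(2) by metis
  have fp: "0 < (fact (Suc k) :: real)" by (rule fact_gt_zero)
  have "0 \<le> lam (Suc (Suc k)) (PF N a 0) x" using h fp by (metis mult_pos_neg not_le)
  then show ?thesis using Suc PF0 by simp
qed

lemma lam_pow_one:
  fixes x :: "nat \<Rightarrow> real"
  assumes mono: "\<forall>i<m. x i < x (Suc i)"
  shows "lam (Suc m) (\<lambda>s. (s - a) ^ m) x = 1"
proof (cases m)
  case 0
  then show ?thesis by (simp add: lam_def)
next
  case (Suc k)
  obtain \<xi> where xi: "PF m a (Suc k) \<xi> = fact (Suc k) * lam (Suc (Suc k)) (PF m a 0) x"
    using lam_mvt[of k x "PF m a"] mono Suc PF_deriv by blast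
  have "PF m a (Suc k) \<xi> = fact m"
    unfolding PF_def Suc fact_prod_rev[of "Suc k"] by (simp add: atLeast0LessThan)
  then have "fact m * lam (Suc m) (PF m a 0) x = fact m" using xi Suc by simp
  then show ?thesis using PF0 by simp
qed

lemma lam_pow_lb:
  fixes x :: "nat \<Rightarrow> real"
  assumes mono: "\<forall>i<m. x i < x (Suc i)" and a: "a \<le> x 0" and m: "0 < m"
  shows "(x m - a) ^ M \<le> lam (Suc m) (\<lambda>s. (s - a) ^ (m + M)) x"
proof (induction M)
  case 0
  then show ?case using lam_pow_one[OF mono] by simp
next
  case (Suc M)
  have inj: "inj_on x {..<Suc m}"
  proof (rule inj_onI)
    fix i j assume "i \<in> {..<Suc m}" "j \<in> {..<Suc m}" "x i = x j"
    then show "i = j" using chain_less[OF mono, of i j] chain_less[OF mono, of j i]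
      by (cases "i < j"; cases "j < i") auto
  qed
  have xm: "a \<le> x m" using a chain_less[OF mono, of 0 m] m by auto
  have nn: "0 \<le> lam m (\<lambda>s. (s - a) ^ (m + M)) x"
    using lam_pow_nonneg[of "m - 1" x a "m + M"] mono a m by simp
  have "lam (Suc m) (\<lambda>s. (s - a) ^ (m + Suc M)) x = lam (Suc m) (\<lambda>s. (s - a) * (s - a) ^ (m + M)) x"
    by simp
  also have "\<dots> = (x m - a) * lam (Suc m) (\<lambda>s. (s - a) ^ (m + M)) x + lam m (\<lambda>s. (s - a) ^ (m + M)) x"
    by (rule lam_mult[OF inj])
  also have "\<dots> \<ge> (x m - a) * (x m - a) ^ M"
    using Suc.IH xm nn by (simp add: add_increasing2 mult_left_mono)
  finally show ?case by simp
qed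


lemma lam_compare:
  fixes F :: "nat \<Rightarrow> real \<Rightarrow> real" and x :: "nat \<Rightarrow> real"
  assumes mono: "\<forall>i<Suc k. x i < x (Suc i)"
    and der: "\<forall>j<Suc k. \<forall>s. x 0 \<le> s \<and> s \<le> x (Suc k) \<longrightarrow> (F j has_real_derivative F (Suc j) s) (at s)"
    and cmp: "\<forall>s. x 0 \<le> s \<and> s \<le> x (Suc k) \<longrightarrow> K * PF (Suc k + M) (x 0) (Suc k) s \<le> F (Suc k) s"
    and K: "0 \<le> K"
  shows "K * (x (Suc k) - x 0) ^ M \<le> lam (Suc (Suc k)) (F 0) x"
proof -
  define H where "H j s = F j s - K * PF (Suc k + M) (x 0) j s" for j s
  have "\<exists>\<xi>. x 0 < \<xi> \<and> \<xi> < x (Suc k) \<and> H (Suc k) \<xi> = fact (Suc k) * lam (Suc (Suc k)) (H 0) x"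
  proof (rule lam_mvt[OF mono])
    show "\<forall>j<Suc k. \<forall>s. x 0 \<le> s \<and> s \<le> x (Suc k) \<longrightarrow> (H j has_real_derivative H (Suc j) s) (at s)"
    proof (intro allI impI)
      fix j s assume j: "j < Suc k" and s: "x 0 \<le> s \<and> s \<le> x (Suc k)"
      have "(F j has_real_derivative F (Suc j) s) (at s)" using der j s by blast
      then have "((\<lambda>s. F j s - K * PF (Suc k + M) (x 0) j s) has_real_derivative F (Suc j) s - K * PF (Suc k + M) (x 0) (Suc j) s) (at s)"
        by (intro DERIV_diff DERIV_cmult PF_deriv)
      then show "(H j has_real_derivative H (Suc j) s) (at s)"
        unfolding H_def[abs_def] by simp
    qed
  qed
  then obtain \<xi> where xi: "x 0 < \<xi>" "\<xi> < x (Suc k)" "H (Suc k) \<xi> = fact (Suc k) * lam (Suc (Suc k)) (H 0) x"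
    by blast
  have "K * PF (Suc k + M) (x 0) (Suc k) \<xi> \<le> F (Suc k) \<xi>" using cmp xi(1,2) by simp
  then have "0 \<le> H (Suc k) \<xi>" unfolding H_def by simp
  then have h: "0 \<le> fact (Suc k) * lam (Suc (Suc k)) (H 0) x" using xi(3) by metis
  have fp: "0 < (fact (Suc k) :: real)" by (rule fact_gt_zero)
  have "0 \<le> lam (Suc (Suc k)) (H 0) x" using h fp by (metis mult_pos_neg not_le)
  moreover have "lam (Suc (Suc k)) (H 0) x = lam (Suc (Suc k)) (F 0) x - K * lam (Suc (Suc k)) (\<lambda>s. (s - x 0) ^ (Suc k + M)) x"
    unfolding H_def PF0 by (rule lam_lin)
  moreover have "(x (Suc k) - x 0) ^ M \<le> lam (Suc (Suc k)) (\<lambda>s. (s - x 0) ^ (Suc k + M)) x"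
    using lam_pow_lb[of "Suc k" x "x 0" M] mono by simp
  ultimately show ?thesis using K by (smt (verit) mult_left_mono)
qed

lemma growth_bound:
  fixes g :: "real \<Rightarrow> real" and y0 b \<beta> :: real and M :: nat
  assumes yb: "y0 < b"
    and pos: "\<forall>s. y0 \<le> s \<and> s \<le> b \<longrightarrow> 0 < g s"
    and mono: "\<forall>s1 s2. y0 \<le> s1 \<and> s1 \<le> s2 \<and> s2 \<le> b \<longrightarrow> g s1 \<le> g s2"
    and dbl: "\<forall>s1 s2. y0 \<le> s1 \<and> s1 \<le> b \<and> y0 \<le> s2 \<and> s2 \<le> b \<longrightarrow>
                 (ln (g s1) + ln (g s2)) / 2 \<le> \<beta> + ln (g ((s1 + s2) / 2))"
    and beta: "0 \<le> \<beta>"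
    and M: "2 * (ln (g b) - ln (g y0)) \<le> real M" "0 < M"
  shows "\<forall>s. y0 \<le> s \<and> s \<le> b \<longrightarrow> g b * exp (- 2 * \<beta>) * ((s - y0) / (b - y0)) ^ M \<le> g s"
proof -
  define L where "L = b - y0"
  have L: "0 < L" using yb by (simp add: L_def)
  define D0 where "D0 = ln (g b) - ln (g y0)"
  define mk where "mk k = b - L / 2 ^ k" for k :: nat
  define G0 where "G0 = g b * exp (- 2 * \<beta>)"
  have mk_in: "y0 \<le> mk k \<and> mk k \<le> b" for k
  proof -
    have "L / 2 ^ k \<le> L" using L by (simp add: divide_le_eq)
    moreover have "0 \<le> L / 2 ^ k" using L by simp
    ultimately show ?thesis unfolding mk_def L_def by auto
  qed
  have mk_mid: "(mk k + b) / 2 = mk (Suc k)" for k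
    unfolding mk_def by (simp add: field_simps)
  have claimD: "ln (g b) - ln (g (mk k)) \<le> D0 / 2 ^ k + 2 * \<beta>" for k
  proof (induction k)
    case 0
    then show ?case using beta by (simp add: mk_def L_def D0_def)
  next
    case (Suc k)
    have "(ln (g (mk k)) + ln (g b)) / 2 \<le> \<beta> + ln (g ((mk k + b) / 2))"
      using dbl mk_in[of k] yb by auto
    then have "(ln (g (mk k)) + ln (g b)) / 2 \<le> \<beta> + ln (g (mk (Suc k)))" using mk_mid by simp
    then have "ln (g b) - ln (g (mk (Suc k))) \<le> \<beta> + (ln (g b) - ln (g (mk k))) / 2" by argo
    also have "\<dots> \<le> \<beta> + (D0 / 2 ^ k + 2 * \<beta>) / 2" using Suc.IH by argo
    also have "\<dots> = D0 / 2 ^ Suc k + 2 * \<beta>" by (simp add: field_simps)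
    finally show ?case .
  qed
  have gb: "0 < g b" using pos yb by auto
  have Pk: "\<forall>s. y0 \<le> s \<and> s \<le> mk k \<longrightarrow> G0 * ((s - y0) / L) ^ M \<le> g s" for k
  proof (induction k)
    case 0
    show ?case
    proof (intro allI impI)
      fix s assume "y0 \<le> s \<and> s \<le> mk 0"
      then have "s = y0" by (simp add: mk_def L_def)
      then show "G0 * ((s - y0) / L) ^ M \<le> g s" using M(2) pos[rule_format, of y0] yb by (simp add: zero_power less_imp_le)
    qed
  next
    case (Suc k)
    show ?case
    proof (intro allI impI)
      fix s assume s: "y0 \<le> s \<and> s \<le> mk (Suc k)"
      show "G0 * ((s - y0) / L) ^ M \<le> g s"
      proof (cases "s \<le> mk k")
        case True then show ?thesis using Suc.IH s by blast
      next
        case False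
        define u where "u = (s - y0) / L"
        have u0: "0 \<le> u" using s L by (simp add: u_def)
        have u1: "u \<le> 1 - 1 / 2 ^ Suc k"
          using s L unfolding u_def mk_def L_def by (simp add: field_simps)
        have "u ^ M \<le> (1 - 1 / 2 ^ Suc k) ^ M" using u1 u0 by (rule power_mono)
        also have "\<dots> \<le> exp (- (1 / 2 ^ Suc k)) ^ M"
        proof (rule power_mono)
          show "1 - 1 / 2 ^ Suc k \<le> exp (- (1 / (2::real) ^ Suc k))"
            using exp_ge_add_one_self[of "- (1 / (2::real) ^ Suc k)"] by simp
          have "1 \<le> 2 * (2::real) ^ k" using one_le_power[of "2::real" k] by argo
          then show "0 \<le> 1 - 1 / (2::real) ^ Suc k" by (simp add: field_simps)
        qed
        also have "\<dots> = exp (- (real M / 2 ^ Suc k))"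
          by (simp add: exp_of_nat_mult[symmetric])
        also have "\<dots> \<le> exp (- (D0 / 2 ^ k))"
        proof -
          have "2 * D0 / 2 ^ Suc k \<le> real M / 2 ^ Suc k"
            using M(1) unfolding D0_def by (simp add: divide_right_mono)
          then show ?thesis by simp
        qed
        finally have uM: "u ^ M \<le> exp (- (D0 / 2 ^ k))" .
        have "exp (ln (g b) - 2 * \<beta> - D0 / 2 ^ k) = exp (ln (g b) + (- 2 * \<beta>) + (- (D0 / 2 ^ k)))"
          by (rule arg_cong[where f=exp]) argo
        also have "\<dots> = exp (ln (g b)) * exp (- 2 * \<beta>) * exp (- (D0 / 2 ^ k))"
          by (simp only: exp_add)
        also have "\<dots> = G0 * exp (- (D0 / 2 ^ k))" unfolding G0_def using gb by simp
        finally have "G0 * exp (- (D0 / 2 ^ k)) = exp (ln (g b) - 2 * \<beta> - D0 / 2 ^ k)" by simp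
        also have "\<dots> \<le> exp (ln (g (mk k)))"
          using claimD[of k] by simp
        also have "\<dots> = g (mk k)" using pos mk_in[of k] by simp
        also have "\<dots> \<le> g s"
        proof -
          have "s \<le> b" using s mk_in[of "Suc k"] by linarith
          then show ?thesis using mono[rule_format, of "mk k" s] mk_in[of k] False by auto
        qed
        finally have "G0 * exp (- (D0 / 2 ^ k)) \<le> g s" .
        moreover have "G0 * u ^ M \<le> G0 * exp (- (D0 / 2 ^ k))"
          using uM gb unfolding G0_def by (simp add: mult_left_mono)
        ultimately show ?thesis unfolding u_def by argo
      qed
    qed
  qed
  show ?thesis
  proof (intro allI impI)
    fix s assume s: "y0 \<le> s \<and> s \<le> b"
    show "g b * exp (- 2 * \<beta>) * ((s - y0) / (b - y0)) ^ M \<le> g s"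
    proof (cases "s = b")
      case True
      then show ?thesis using gb beta L by (simp add: L_def mult_le_cancel_left1)
    next
      case False
      then have "0 < (b - s) / L" using s L by simp
      then obtain k where k: "(1/2::real) ^ k < (b - s) / L"
        using real_arch_pow_inv[of "(b - s) / L" "1/2"] by auto
      have "L / 2 ^ k < b - s" using k L by (simp add: field_simps power_divide)
      then have "s \<le> mk k" by (simp add: mk_def)
      then show ?thesis using Pk[of k] s unfolding G0_def L_def by blast
    qed
  qed
qed


lemma ivl_between:
  assumes "x \<in> ivl a b" "z \<in> ivl a b" "x \<le> s" "s \<le> z"
  shows "s \<in> ivl a b"
proof -
  have "a < ereal x" "ereal z < b" using assms(1,2) by (auto simp: ivl_def)
  moreover have "ereal x \<le> ereal s" "ereal s \<le> ereal z" using assms(3,4) by auto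
  ultimately have "a < ereal s" "ereal s < b"
    using order.strict_trans2[of a "ereal x" "ereal s"] order.strict_trans1[of "ereal s" "ereal z" b] by auto
  then show ?thesis unfolding ivl_def by simp
qed

lemma log_doubling:
  fixes g :: "real \<Rightarrow> real" and e A :: real
  assumes e: "0 < e" and g1: "0 < g s1" and g2: "0 < g s2" and g3: "0 < g s3"
    and h: "sqrt (g s1 powr e * g s2 powr e) \<le> A * g s3 powr e"
  shows "(ln (g s1) + ln (g s2)) / 2 \<le> ln A / e + ln (g s3)"
proof -
  have pos: "0 < sqrt (g s1 powr e * g s2 powr e)" using g1 g2 by simp
  then have Apos: "0 < A * g s3 powr e" using h by linarith
  then have A: "0 < A" using g3 by (simp add: zero_less_mult_iff)
  have "ln (sqrt (g s1 powr e * g s2 powr e)) \<le> ln (A * g s3 powr e)"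
    by (rule iffD2[OF ln_le_cancel_iff[OF pos Apos] h])
  moreover have "ln (sqrt (g s1 powr e * g s2 powr e)) = e * (ln (g s1) + ln (g s2)) / 2"
    using g1 g2 by (simp add: ln_sqrt ln_mult ln_powr algebra_simps)
  moreover have "ln (A * g s3 powr e) = ln A + e * ln (g s3)"
    using A g3 by (simp add: ln_mult ln_powr)
  ultimately have H: "e * (ln (g s1) + ln (g s2)) / 2 \<le> ln A + e * ln (g s3)"
    by argo
  have "(ln (g s1) + ln (g s2)) / 2 = (e * (ln (g s1) + ln (g s2)) / 2) / e" using e by simp
  also have "\<dots> \<le> (ln A + e * ln (g s3)) / e" using H e by (rule divide_right_mono[OF _ less_imp_le])
  also have "\<dots> = ln A / e + ln (g s3)" using e by (simp add: field_simps)
  finally show ?thesis .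
qed


lemma main_lower:
  fixes phi :: "real \<Rightarrow> real" and a b :: ereal and y :: "nat \<Rightarrow> real" and A \<alpha> :: real and k d :: nat
  assumes dk: "d = Suc (Suc k)"
    and Cd: "Cd_on d (ivl a b) phi"
    and gpos: "\<forall>s\<in>ivl a b. 0 < (deriv ^^ d) phi s"
    and gmono: "mono_on (ivl a b) ((deriv ^^ d) phi)"
    and dbl: "\<forall>s1\<in>ivl a b. \<forall>s2\<in>ivl a b.
        sqrt (((deriv ^^ d) phi s1) powr (2 / real (d^2 + d)) * ((deriv ^^ d) phi s2) powr (2 / real (d^2 + d)))
          \<le> A * ((deriv ^^ d) phi ((s1 + s2) / 2)) powr (2 / real (d^2 + d))"
    and yin: "\<forall>i<d. y i \<in> ivl a b"
    and ysort: "\<forall>i<Suc k. y i < y (Suc i)"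
    and al: "0 < \<alpha>" "\<alpha> \<le> 1"
  shows "exp (- 2 * (ln (max A 1) / (2 / real (d^2 + d)))) / (real (Suc k) + 2 + 2 * real (Suc k) / \<alpha>) ^ Suc k
          * ((deriv ^^ d) phi (y 0) powr \<alpha> * (deriv ^^ d) phi (y (Suc k)) powr (1 - \<alpha>))
         \<le> lam d (deriv phi) y"
proof -
  define g where "g = (deriv ^^ d) phi"
  define e where "e = 2 / real (d^2 + d)"
  define m where "m = Suc k"
  have "0 < d^2 + d" using dk by simp
  then have e: "0 < e" unfolding e_def by (metis of_nat_0_less_iff zero_less_divide_iff zero_less_numeral)
  have y0m: "y 0 < y m" using chain_less[OF ysort, of 0 m] by (simp add: m_def)
  have y0i: "y 0 \<in> ivl a b" and ymi: "y m \<in> ivl a b" using yin by (auto simp: dk m_def)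
  have inI: "s \<in> ivl a b" if "y 0 \<le> s" "s \<le> y m" for s
    using ivl_between[OF y0i ymi that] .
  have gp: "0 < g s" if "y 0 \<le> s" "s \<le> y m" for s
    using gpos inI[OF that] unfolding g_def by blast
  have gmon: "g s1 \<le> g s2" if "y 0 \<le> s1" "s1 \<le> s2" "s2 \<le> y m" for s1 s2
    using mono_onD[OF gmono inI[of s1] inI[of s2]] that unfolding g_def by auto
  have dbl': "sqrt (g s1 powr e * g s2 powr e) \<le> A * g ((s1 + s2) / 2) powr e"
    if "s1 \<in> ivl a b" "s2 \<in> ivl a b" for s1 s2
    using dbl that unfolding g_def e_def by blast
  have A1: "1 \<le> A"
  proof -
    have G: "0 < g (y 0) powr e" using gp[of "y 0"] y0m by simp
    have "sqrt (g (y 0) powr e * g (y 0) powr e) = g (y 0) powr e"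
      using G by (simp add: real_sqrt_mult_self)
    then have "g (y 0) powr e \<le> A * g (y 0) powr e" using dbl'[OF y0i y0i] by simp
    then show ?thesis using G by (simp add: mult_le_cancel_right1)
  qed
  define \<beta> where "\<beta> = ln A / e"
  have beta: "0 \<le> \<beta>" unfolding \<beta>_def using A1 e by simp
  have ldbl: "\<forall>s1 s2. y 0 \<le> s1 \<and> s1 \<le> y m \<and> y 0 \<le> s2 \<and> s2 \<le> y m \<longrightarrow>
                 (ln (g s1) + ln (g s2)) / 2 \<le> \<beta> + ln (g ((s1 + s2) / 2))"
  proof (intro allI impI)
    fix s1 s2 assume s: "y 0 \<le> s1 \<and> s1 \<le> y m \<and> y 0 \<le> s2 \<and> s2 \<le> y m"
    have "(ln (g s1) + ln (g s2)) / 2 \<le> ln A / e + ln (g ((s1 + s2) / 2))"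
    proof (rule log_doubling[of e g s1 s2 "(s1 + s2) / 2" A])
      have i1: "s1 \<in> ivl a b" "s2 \<in> ivl a b" using inI s by auto
      show "sqrt (g s1 powr e * g s2 powr e) \<le> A * g ((s1 + s2) / 2) powr e" using dbl'[OF i1] .
      show "0 < e" by (rule e)
      show "0 < g s1" "0 < g s2" "0 < g ((s1 + s2) / 2)" using gp s by auto
    qed
    then show "(ln (g s1) + ln (g s2)) / 2 \<le> \<beta> + ln (g ((s1 + s2) / 2))" unfolding \<beta>_def .
  qed
  define D0 where "D0 = ln (g (y m)) - ln (g (y 0))"
  have D0: "0 \<le> D0" unfolding D0_def using gmon[of "y 0" "y m"] gp[of "y 0"] y0m by simp
  define M where "M = nat \<lceil>2 * D0\<rceil> + 1"
  have M1: "2 * D0 \<le> real M" unfolding M_def by linarith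
  have M2: "real M \<le> 2 * D0 + 2" unfolding M_def using D0 by linarith
  have grow: "\<forall>s. y 0 \<le> s \<and> s \<le> y m \<longrightarrow> g (y m) * exp (- 2 * \<beta>) * ((s - y 0) / (y m - y 0)) ^ M \<le> g s"
    by (rule growth_bound[OF y0m _ _ ldbl beta]) (use gp gmon M1 in \<open>auto simp: D0_def M_def\<close>)
  define N where "N = m + M"
  define Pm where "Pm = (\<Prod>i<m. real (N - i))"
  have Pm: "0 < Pm" unfolding Pm_def N_def by (intro prod_pos) auto
  define L where "L = y m - y 0"
  have L: "0 < L" using y0m by (simp add: L_def)
  define K where "K = g (y m) * exp (- 2 * \<beta>) / (Pm * L ^ M)"
  have K: "0 \<le> K" unfolding K_def using gp[of "y m"] y0m Pm L by simp
  have "K * (y (Suc k) - y 0) ^ M \<le> lam (Suc (Suc k)) ((\<lambda>j. (deriv ^^ Suc j) phi) 0) y"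
  proof (rule lam_compare[OF ysort _ _ K])
    show "\<forall>j<Suc k. \<forall>s. y 0 \<le> s \<and> s \<le> y (Suc k) \<longrightarrow>
      ((deriv ^^ Suc j) phi has_real_derivative (deriv ^^ Suc (Suc j)) phi s) (at s)"
    proof (intro allI impI)
      fix j s assume j: "j < Suc k" and s: "y 0 \<le> s \<and> s \<le> y (Suc k)"
      have "s \<in> ivl a b" using inI s by (simp add: m_def)
      moreover have "Suc j < d" using j dk by simp
      ultimately show "((deriv ^^ Suc j) phi has_real_derivative (deriv ^^ Suc (Suc j)) phi s) (at s)"
        using Cd unfolding Cd_on_def by blast
    qed
    show "\<forall>s. y 0 \<le> s \<and> s \<le> y (Suc k) \<longrightarrow> K * PF (Suc k + M) (y 0) (Suc k) s \<le> (deriv ^^ Suc (Suc k)) phi s"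
    proof (intro allI impI)
      fix s assume s: "y 0 \<le> s \<and> s \<le> y (Suc k)"
      have "K * PF (Suc k + M) (y 0) (Suc k) s = g (y m) * exp (- 2 * \<beta>) * ((s - y 0) / (y m - y 0)) ^ M"
      proof -
        have PFe: "PF (Suc k + M) (y 0) (Suc k) s = Pm * (s - y 0) ^ M"
          unfolding PF_def Pm_def N_def m_def by simp
        have "L ^ M \<noteq> 0" using L by simp
        then show ?thesis unfolding PFe K_def using Pm
          by (simp add: field_simps power_divide L_def)
      qed
      also have "\<dots> \<le> g s" using grow s by (simp add: m_def)
      finally show "K * PF (Suc k + M) (y 0) (Suc k) s \<le> (deriv ^^ Suc (Suc k)) phi s"
        unfolding g_def dk .
    qed
  qed
  then have low: "g (y m) * exp (- 2 * \<beta>) / Pm \<le> lam d (deriv phi) y"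
    unfolding K_def dk m_def L_def using L y0m by (simp add: field_simps m_def)
  define Kc where "Kc = real (Suc k) + 2 + 2 * real (Suc k) / \<alpha>"
  have "0 \<le> 2 * real (Suc k) / \<alpha>" using al by simp
  moreover have "0 \<le> real (Suc k)" by simp
  ultimately have Kc: "0 < Kc" unfolding Kc_def by argo
  have "Pm \<le> (\<Prod>i<m. real N)" unfolding Pm_def by (intro prod_mono) auto
  also have "\<dots> = real N ^ m" by simp
  also have "real N \<le> Kc * (1 + \<alpha> * D0 / real m)"
  proof -
    have "real N \<le> real m + 2 * D0 + 2" using M2 by (simp add: N_def)
    also have "\<dots> \<le> Kc * (1 + \<alpha> * D0 / real m)"
    proof -
      have q0: "0 \<le> \<alpha> * D0 / real m" using al D0 by (simp add: m_def)
      have "Kc * (1 + \<alpha> * D0 / real m) = Kc + Kc * (\<alpha> * D0 / real m)" by (simp add: algebra_simps)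
      moreover have "2 * real m / \<alpha> * (\<alpha> * D0 / real m) \<le> Kc * (\<alpha> * D0 / real m)"
        by (rule mult_right_mono[OF _ q0]) (simp add: Kc_def m_def)
      moreover have "2 * real m / \<alpha> * (\<alpha> * D0 / real m) = 2 * D0"
      proof -
        have "real m \<noteq> 0" "\<alpha> \<noteq> 0" using al by (auto simp: m_def)
        then show ?thesis by (simp add: field_simps)
      qed
      moreover have "real m + 2 \<le> Kc" unfolding Kc_def m_def using al by simp
      ultimately show ?thesis by argo
    qed
    finally show ?thesis .
  qed
  then have "real N ^ m \<le> (Kc * (1 + \<alpha> * D0 / real m)) ^ m" by (rule power_mono) simp
  also have "\<dots> = Kc ^ m * (1 + \<alpha> * D0 / real m) ^ m" by (simp add: power_mult_distrib)
  also have "(1 + \<alpha> * D0 / real m) ^ m \<le> exp (\<alpha> * D0)"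
  proof (rule exp_ge_one_plus_x_over_n_power_n)
    have "0 \<le> \<alpha> * D0" using al D0 by simp
    then show "\<alpha> * D0 \<ge> - real m" by simp
    show "m > 0" by (simp add: m_def)
  qed
  finally have PmB: "Pm \<le> Kc ^ m * exp (\<alpha> * D0)" using Kc by (simp add: mult_left_mono)
  have gpow: "g (y 0) powr \<alpha> * g (y m) powr (1 - \<alpha>) = g (y m) / exp (\<alpha> * D0)"
  proof -
    have p0: "0 < g (y 0)" "0 < g (y m)" using gp[of "y 0"] gp[of "y m"] y0m by auto
    have "g (y 0) powr \<alpha> * g (y m) powr (1 - \<alpha>) = exp (\<alpha> * ln (g (y 0)) + (1 - \<alpha>) * ln (g (y m)))"
      using p0 by (simp add: powr_def exp_add)
    also have "\<alpha> * ln (g (y 0)) + (1 - \<alpha>) * ln (g (y m)) = ln (g (y m)) - \<alpha> * D0"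
      unfolding D0_def by (simp add: algebra_simps)
    also have "exp (ln (g (y m)) - \<alpha> * D0) = g (y m) / exp (\<alpha> * D0)"
      using p0 by (simp add: exp_diff)
    finally show ?thesis .
  qed
  have "exp (- 2 * \<beta>) / Kc ^ m * (g (y 0) powr \<alpha> * g (y m) powr (1 - \<alpha>))
        = g (y m) * exp (- 2 * \<beta>) / (Kc ^ m * exp (\<alpha> * D0))"
    unfolding gpow by (simp add: field_simps)
  also have "\<dots> \<le> g (y m) * exp (- 2 * \<beta>) / Pm"
    using Pm PmB gp[of "y m"] y0m by (intro divide_left_mono) auto
  also have "\<dots> \<le> lam d (deriv phi) y" by (rule low)
  moreover have "max A 1 = A" using A1 by simp
  ultimately show ?thesis unfolding g_def e_def \<beta>_def Kc_def m_def by simp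
qed


lemma det_mat_diag: "det (mat_diag n f) = (\<Prod>i<n. f i)"
proof -
  have "upper_triangular (mat_diag n f)" unfolding upper_triangular_def mat_diag_def by auto
  then have "det (mat_diag n f) = prod_list (diag_mat (mat_diag n f))"
    using det_upper_triangular mat_diag_dim by blast
  also have "\<dots> = (\<Prod>i = 0..<n. f i)" unfolding prod_list_diag_prod by (simp add: mat_diag_def)
  finally show ?thesis by (simp add: atLeast0LessThan)
qed

definition rr :: "nat \<Rightarrow> nat \<Rightarrow> real" where
  "rr d k = (if Suc k < d then 1 / fact k else 1)"

lemma gam_deriv:
  assumes "k + 1 < d \<or> (phi has_real_derivative deriv phi s) (at s)"
  shows "(gam d phi k has_real_derivative rr d k * (if Suc k < d then s ^ k else deriv phi s)) (at s)"
proof (cases "k + 1 < d")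
  case True
  have "((\<lambda>s. s ^ (k + 1)) has_real_derivative real (k + 1) * s ^ k) (at s)"
    using DERIV_pow[of "k + 1" s UNIV] by simp
  then have "((\<lambda>s. s ^ (k + 1) / fact (k + 1)) has_real_derivative (real (k + 1) * s ^ k) / fact (k + 1)) (at s)"
    by (rule DERIV_cdivide)
  moreover have "(real (k + 1) * s ^ k) / fact (k + 1) = rr d k * (if Suc k < d then s ^ k else deriv phi s)"
  proof -
    have f: "(fact (k + 1) :: real) = real (k + 1) * fact k" by (simp only: Suc_eq_plus1[symmetric] fact_Suc)
    have "(real (k + 1) * s ^ k) / fact (k + 1) = s ^ k / fact k"
      unfolding f by (rule mult_divide_mult_cancel_left) simp
    then show ?thesis using True by (simp add: rr_def)
  qed
  ultimately show ?thesis using True unfolding gam_def[abs_def] by simp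
next
  case False
  then have "(phi has_real_derivative deriv phi s) (at s)" using assms by simp
  moreover have "gam d phi k = phi" using False by (auto simp: gam_def)
  ultimately show ?thesis using False by (simp add: rr_def)
qed

lemma Fmap_deriv:
  assumes i: "i < d" and ph: "(phi has_real_derivative deriv phi (t i)) (at (t i))"
  shows "deriv (\<lambda>s. Fmap d phi \<sigma> (t(i := s)) k) (t i) = rr d k * (if Suc k < d then t i ^ k else deriv phi (t i)) * \<sigma> i"
proof -
  define G where "G = rr d k * (if Suc k < d then t i ^ k else deriv phi (t i))"
  have gd: "(gam d phi k has_real_derivative G) (at (t i))"
    unfolding G_def using gam_deriv ph by blast
  have "((\<lambda>s. \<Sum>l<d. \<sigma> l * gam d phi k ((t(i := s)) l)) has_real_derivative
        (\<Sum>l<d. if l = i then \<sigma> i * G else 0)) (at (t i))"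
  proof (rule DERIV_sum)
    fix l assume "l \<in> {..<d}"
    show "((\<lambda>s. \<sigma> l * gam d phi k ((t(i := s)) l)) has_real_derivative (if l = i then \<sigma> i * G else 0)) (at (t i))"
    proof (cases "l = i")
      case True
      then show ?thesis using DERIV_cmult[OF gd, of "\<sigma> i"] by simp
    next
      case False
      then show ?thesis by simp
    qed
  qed
  moreover have "(\<Sum>l<d. if l = i then \<sigma> i * G else 0) = \<sigma> i * G" using i by simp
  ultimately have "((\<lambda>s. Fmap d phi \<sigma> (t(i := s)) k) has_real_derivative \<sigma> i * G) (at (t i))"
    unfolding Fmap_def by simp
  then show ?thesis unfolding G_def by (simp add: DERIV_imp_deriv)
qed


lemma Jac_formula:
  assumes d: "0 < d" and inj: "inj_on t {..<d}"
    and ph: "\<forall>i<d. (phi has_real_derivative deriv phi (t i)) (at (t i))"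
    and sg: "\<forall>i<d. \<sigma> i \<in> {-1, 1}"
  shows "Jac d phi \<sigma> t = (\<Prod>k<d. rr d k) * Vand d t * \<bar>lam d (deriv phi) t\<bar>"
proof -
  define W where "W = Wm d (deriv phi) t"
  have W: "W \<in> carrier_mat d d" unfolding W_def by simp
  have eq: "Matrix.mat d d (\<lambda>(k, i). deriv (\<lambda>s. Fmap d phi \<sigma> (t(i := s)) k) (t i))
      = mat_diag d (rr d) * W * mat_diag d \<sigma>"
  proof -
    have "mat_diag d (rr d) * W = Matrix.mat d d (\<lambda>(i,j). rr d i * W $$ (i,j))"
      by (rule mat_diag_mult_left[OF W])
    moreover have "Matrix.mat d d (\<lambda>(i,j). rr d i * W $$ (i,j)) * mat_diag d \<sigma>
        = Matrix.mat d d (\<lambda>(i,j). Matrix.mat d d (\<lambda>(i,j). rr d i * W $$ (i,j)) $$ (i,j) * \<sigma> j)"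
      by (rule mat_diag_mult_right) simp
    ultimately show ?thesis
      by (auto intro!: eq_matI simp: W_def Wm_def Fmap_deriv ph)
  qed
  have "det (mat_diag d (rr d) * W * mat_diag d \<sigma>) = det (mat_diag d (rr d) * W) * det (mat_diag d \<sigma>)"
    by (rule det_mult[OF mult_carrier_mat[OF mat_diag_dim W] mat_diag_dim])
  also have "\<dots> = det (mat_diag d (rr d)) * det W * det (mat_diag d \<sigma>)"
    using det_mult[OF mat_diag_dim W] by simp
  finally have dt: "det (mat_diag d (rr d) * W * mat_diag d \<sigma>) = (\<Prod>k<d. rr d k) * det W * (\<Prod>i<d. \<sigma> i)"
    unfolding det_mat_diag .
  have s1: "\<bar>\<Prod>i<d. \<sigma> i\<bar> = 1"
  proof -
    have "\<bar>\<Prod>i<d. \<sigma> i\<bar> = (\<Prod>i<d. \<bar>\<sigma> i\<bar>)" by (rule abs_prod)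
    also have "\<dots> = (\<Prod>i<d. (1::real))" by (rule prod.cong) (use sg in auto)
    finally show ?thesis by simp
  qed
  have rpos: "0 < (\<Prod>k<d. rr d k)" by (intro prod_pos) (auto simp: rr_def)
  have dW: "det W = (\<Prod>j<d. \<Prod>i<j. (t j - t i)) * lam d (deriv phi) t"
    unfolding W_def by (subst det_Wm_lam[OF inj d]) (subst Vs_formula[OF inj], rule refl)
  have "Jac d phi \<sigma> t = \<bar>(\<Prod>k<d. rr d k) * det W * (\<Prod>i<d. \<sigma> i)\<bar>"
    unfolding Jac_def eq dt ..
  also have "\<dots> = \<bar>\<Prod>k<d. rr d k\<bar> * (\<bar>\<Prod>j<d. \<Prod>i<j. (t j - t i)\<bar> * \<bar>lam d (deriv phi) t\<bar>) * \<bar>\<Prod>i<d. \<sigma> i\<bar>"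
    unfolding dW by (simp only: abs_mult)
  also have "\<dots> = (\<Prod>k<d. rr d k) * Vand d t * \<bar>lam d (deriv phi) t\<bar>"
    unfolding s1 Vand_def using rpos by simp
  finally show ?thesis .
qed


lemma prod_bound:
  fixes g :: "real \<Rightarrow> real" and y :: "nat \<Rightarrow> real" and n :: "nat \<Rightarrow> real"
  assumes gp: "\<forall>j<Suc m. 0 < g (y j)" and gm: "\<forall>j<Suc m. g (y j) \<le> g (y m)"
    and np: "\<forall>j<Suc m. 0 \<le> n j" and e: "0 \<le> e" and es: "e * (\<Sum>j<Suc m. n j) = 1"
  shows "(\<Prod>j<Suc m. (g (y j) powr e) powr n j) \<le> g (y 0) powr (e * n 0) * g (y m) powr (1 - e * n 0)"
proof -
  have "(\<Prod>j<Suc m. (g (y j) powr e) powr n j) = (g (y 0) powr e) powr n 0 * (\<Prod>j<m. (g (y (Suc j)) powr e) powr n (Suc j))"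
    by (rule prod.lessThan_Suc_shift)
  also have "(g (y 0) powr e) powr n 0 = g (y 0) powr (e * n 0)" by (simp add: powr_powr)
  also have "(\<Prod>j<m. (g (y (Suc j)) powr e) powr n (Suc j)) \<le> (\<Prod>j<m. g (y m) powr (e * n (Suc j)))"
  proof (rule prod_mono)
    fix j assume j: "j \<in> {..<m}"
    have "(g (y (Suc j)) powr e) powr n (Suc j) = g (y (Suc j)) powr (e * n (Suc j))" by (simp add: powr_powr)
    also have "\<dots> \<le> g (y m) powr (e * n (Suc j))"
      by (rule powr_mono2) (use j gp gm np e in auto)
    finally show "0 \<le> (g (y (Suc j)) powr e) powr n (Suc j) \<and> (g (y (Suc j)) powr e) powr n (Suc j) \<le> g (y m) powr (e * n (Suc j))"
      by simp
  qed
  also have "(\<Prod>j<m. g (y m) powr (e * n (Suc j))) = g (y m) powr (\<Sum>j<m. e * n (Suc j))"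
    using gp by (subst powr_sum) auto
  also have "(\<Sum>j<m. e * n (Suc j)) = 1 - e * n 0"
  proof -
    have "(\<Sum>j<Suc m. n j) = n 0 + (\<Sum>j<m. n (Suc j))" by (rule sum.lessThan_Suc_shift)
    then have "e * n 0 + e * (\<Sum>j<m. n (Suc j)) = 1" using es by (simp add: algebra_simps)
    then show ?thesis by (simp add: sum_distrib_left algebra_simps)
  qed
  finally show ?thesis by (simp add: mult_left_mono)
qed


theorem lemma2p1:
  fixes A :: real and d :: nat and n :: "nat \<Rightarrow> real"
  assumes "d \<ge> 2"
    and "\<forall>j<d. n j > 0"
    and "\<forall>i j. i \<le> j \<longrightarrow> j < d \<longrightarrow> n i \<le> n j"
    and "(\<Sum>j<d. n j) = real (d * (d + 1)) / 2"
  shows "\<exists>c>0. \<forall>(a::ereal) (b::ereal) (phi::real \<Rightarrow> real) (\<sigma>::nat \<Rightarrow> real) (t::nat \<Rightarrow> real) (p::nat \<Rightarrow> nat).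
     a < b \<longrightarrow>
     Cd_on d (ivl a b) phi \<longrightarrow>
     (\<forall>j\<le>d. \<forall>s\<in>ivl a b. (deriv ^^ j) phi s > 0) \<longrightarrow>
     mono_on (ivl a b) ((deriv ^^ d) phi) \<longrightarrow>
     (\<forall>s1\<in>ivl a b. \<forall>s2\<in>ivl a b.
        sqrt (((deriv ^^ d) phi s1) powr (2 / real (d^2 + d)) * ((deriv ^^ d) phi s2) powr (2 / real (d^2 + d)))
          \<le> A * ((deriv ^^ d) phi ((s1 + s2) / 2)) powr (2 / real (d^2 + d))) \<longrightarrow>
     \<sigma> 0 = 1 \<longrightarrow> (\<forall>i<d. \<sigma> i \<in> {-1, 1}) \<longrightarrow>
     p permutes {..<d} \<longrightarrow>
     (\<forall>j<d. t (p j) \<in> ivl a b) \<longrightarrow>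
     (\<forall>j. Suc j < d \<longrightarrow> t (p j) < t (p (Suc j))) \<longrightarrow>
     Jac d phi \<sigma> t \<ge>
       c * (\<Prod>j<d. (((deriv ^^ d) phi (t (p j))) powr (2 / real (d^2 + d))) powr n j) * Vand d t"
proof -
  define k where "k = d - 2"
  have dk: "d = Suc (Suc k)" using assms(1) unfolding k_def by simp
  define e where "e = 2 / real (d^2 + d)"
  have dd: "0 < d^2 + d" using dk by simp
  have e: "0 < e" unfolding e_def using dd by (metis of_nat_0_less_iff zero_less_divide_iff zero_less_numeral)
  have es: "e * (\<Sum>j<d. n j) = 1"
  proof -
    have X: "real (d * (d + 1)) = real (d^2 + d)" by (simp add: power2_eq_square algebra_simps)
    have Xp: "0 < real (d^2 + d)" using dd by (simp only: of_nat_0_less_iff)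
    define X where "X = real (d^2 + d)"
    have "e * (\<Sum>j<d. n j) = 2 / X * (X / 2)" unfolding assms(4) e_def X X_def ..
    also have "\<dots> = 1" using Xp unfolding X_def[symmetric] by simp
    finally show ?thesis .
  qed
  define \<alpha> where "\<alpha> = e * n 0"
  have al0: "0 < \<alpha>" unfolding \<alpha>_def using e assms(2) dk by simp
  have al1: "\<alpha> \<le> 1"
  proof -
    have "n 0 \<le> (\<Sum>j<d. n j)"
      by (rule member_le_sum) (use assms(2) dk in auto)
    then have "e * n 0 \<le> e * (\<Sum>j<d. n j)" using e by (simp add: mult_left_mono)
    then show ?thesis unfolding \<alpha>_def es .
  qed
  define c0 where "c0 = exp (- 2 * (ln (max A 1) / (2 / real (d^2 + d)))) / (real (Suc k) + 2 + 2 * real (Suc k) / \<alpha>) ^ Suc k"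
  define R where "R = (\<Prod>k<d. rr d k)"
  have R: "0 < R" unfolding R_def by (intro prod_pos) (auto simp: rr_def)
  have "0 \<le> 2 * real (Suc k) / \<alpha>" using al0 by simp
  moreover have "0 \<le> real (Suc k)" by simp
  ultimately have Kc: "0 < real (Suc k) + 2 + 2 * real (Suc k) / \<alpha>" by argo
  have c0: "0 < c0" unfolding c0_def using Kc by simp
  show ?thesis
  proof (intro exI[of _ "R * c0"] conjI allI impI)
    show "0 < R * c0" using R c0 by simp
    fix a b :: ereal and phi :: "real \<Rightarrow> real" and \<sigma> :: "nat \<Rightarrow> real" and t :: "nat \<Rightarrow> real" and p :: "nat \<Rightarrow> nat"
    assume ab: "a < b"
      and Cd: "Cd_on d (ivl a b) phi"
      and pos: "\<forall>j\<le>d. \<forall>s\<in>ivl a b. (deriv ^^ j) phi s > 0"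
      and mon: "mono_on (ivl a b) ((deriv ^^ d) phi)"
      and dbl: "\<forall>s1\<in>ivl a b. \<forall>s2\<in>ivl a b.
        sqrt (((deriv ^^ d) phi s1) powr (2 / real (d^2 + d)) * ((deriv ^^ d) phi s2) powr (2 / real (d^2 + d)))
          \<le> A * ((deriv ^^ d) phi ((s1 + s2) / 2)) powr (2 / real (d^2 + d))"
      and s0: "\<sigma> 0 = 1" and sg: "\<forall>i<d. \<sigma> i \<in> {-1, 1}"
      and p: "p permutes {..<d}"
      and tin: "\<forall>j<d. t (p j) \<in> ivl a b"
      and tsort: "\<forall>j. Suc j < d \<longrightarrow> t (p j) < t (p (Suc j))"
    define y where "y = t \<circ> p"
    define g where "g = (deriv ^^ d) phi"
    have ysort: "\<forall>i<Suc k. y i < y (Suc i)" using tsort dk by (simp add: y_def)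
    have yin: "\<forall>i<d. y i \<in> ivl a b" using tin by (simp add: y_def)
    have pimg: "p ` {..<d} = {..<d}" by (rule permutes_image[OF p])
    have tin': "t i \<in> ivl a b" if "i < d" for i
    proof -
      have "i \<in> p ` {..<d}" using pimg that by simp
      then obtain j where "j < d" "p j = i" by auto
      then show ?thesis using tin by auto
    qed
    have inj: "inj_on t {..<d}"
    proof (rule inj_onI)
      fix i j assume i: "i \<in> {..<d}" and j: "j \<in> {..<d}" and tij: "t i = t j"
      have "i \<in> p ` {..<d}" "j \<in> p ` {..<d}" using pimg i j by auto
      then obtain i' j' where i': "i' < d" "p i' = i" and j': "j' < d" "p j' = j" by auto
      have "y i' = y j'" using tij i' j' by (simp add: y_def)
      then have "i' = j'"
        using chain_less[OF ysort, of i' j'] chain_less[OF ysort, of j' i'] i' j' dk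
        by (cases "i' < j'"; cases "j' < i'") auto
      then show "i = j" using i' j' by simp
    qed
    have ph: "\<forall>i<d. (phi has_real_derivative deriv phi (t i)) (at (t i))"
    proof (intro allI impI)
      fix i assume "i < d"
      then have "((deriv ^^ 0) phi has_real_derivative (deriv ^^ Suc 0) phi (t i)) (at (t i))"
        using Cd tin' dk unfolding Cd_on_def by blast
      then show "(phi has_real_derivative deriv phi (t i)) (at (t i))" by simp
    qed
    have J: "Jac d phi \<sigma> t = R * Vand d t * \<bar>lam d (deriv phi) y\<bar>"
      unfolding R_def y_def lam_perm[OF p] by (rule Jac_formula[OF _ inj ph sg]) (simp add: dk)
    have low: "c0 * (g (y 0) powr \<alpha> * g (y (Suc k)) powr (1 - \<alpha>)) \<le> lam d (deriv phi) y"
      unfolding c0_def g_def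
    proof (rule main_lower[OF dk Cd _ mon dbl yin ysort al0 al1])
      show "\<forall>s\<in>ivl a b. 0 < (deriv ^^ d) phi s" using pos by blast
    qed
    have gp: "0 < g s" if "s \<in> ivl a b" for s using pos that unfolding g_def by blast
    have pb: "(\<Prod>j<Suc (Suc k). (g (y j) powr e) powr n j) \<le> g (y 0) powr (e * n 0) * g (y (Suc k)) powr (1 - e * n 0)"
    proof (rule prod_bound)
      show "\<forall>j<Suc (Suc k). 0 < g (y j)" using yin gp dk by auto
      show "\<forall>j<Suc (Suc k). g (y j) \<le> g (y (Suc k))"
      proof (intro allI impI)
        fix j assume j: "j < Suc (Suc k)"
        have "y j \<le> y (Suc k)"
          using chain_less[OF ysort, of j "Suc k"] j by (cases "j = Suc k") auto
        then show "g (y j) \<le> g (y (Suc k))"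
          using mono_onD[OF mon, of "y j" "y (Suc k)"] yin j dk unfolding g_def by auto
      qed
      show "\<forall>j<Suc (Suc k). 0 \<le> n j" using assms(2) dk by (auto simp: less_imp_le)
      show "0 \<le> e" using e by simp
      show "e * (\<Sum>j<Suc (Suc k). n j) = 1" using es dk by simp
    qed
    have V: "0 \<le> Vand d t" unfolding Vand_def by simp
    have "R * c0 * (\<Prod>j<d. (((deriv ^^ d) phi (t (p j))) powr (2 / real (d^2 + d))) powr n j) * Vand d t
        = R * Vand d t * (c0 * (\<Prod>j<Suc (Suc k). (g (y j) powr e) powr n j))"
      unfolding g_def y_def e_def dk by simp
    also have "\<dots> \<le> R * Vand d t * (c0 * (g (y 0) powr \<alpha> * g (y (Suc k)) powr (1 - \<alpha>)))"
      using pb R V c0 unfolding \<alpha>_def by (intro mult_left_mono) auto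
    also have "\<dots> \<le> R * Vand d t * \<bar>lam d (deriv phi) y\<bar>"
      using low R V by (intro mult_left_mono) auto
    also have "\<dots> = Jac d phi \<sigma> t" using J by simp
    finally show "R * c0 * (\<Prod>j<d. (((deriv ^^ d) phi (t (p j))) powr (2 / real (d^2 + d))) powr n j) * Vand d t \<le> Jac d phi \<sigma> t" .
  qed
qed

end
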